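(* Let $r\ge1$ and $n\ge1$ be integers, let $A\subset\{0,1\}^n$ have density $\alpha$ inside $\{0,1\}^n$ and let $B\subset\{0,\dots,r\}^n$ have density $\beta$ inside $\{0,\dots,r\}^n$. Then the sumset $A+B=\{a+b:a\in A,b\in B\}$ (addition in $\mathbb{Z}^n$) has density at least $\alpha\beta$ inside $\{0,\dots,r+1\}^n$.
   Context: The density of a subset $X$ of a finite set $Y$ inside $Y$ is $|X|/|Y|$. *)

theory Defs
  imports Complex_Main
begin

text \<open>Points of Z^n are modelled as functions nat => int that vanish outside {..<n}.
  grid n m is the box {0,...,m}^n.\<close>
definition grid :: "nat \<Rightarrow> int \<Rightarrow> (nat \<Rightarrow> int) set" where
  "grid n m = {x. (\<forall>i<n. 0 \<le> x i \<and> x i \<le> m) \<and> (\<forall>i\<ge>n. x i = 0)}"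

definition density :: "'a set \<Rightarrow> 'a set \<Rightarrow> real" where
  "density X Y = real (card X) / real (card Y)"

definition sumset :: "(nat \<Rightarrow> int) set \<Rightarrow> (nat \<Rightarrow> int) set \<Rightarrow> (nat \<Rightarrow> int) set" where
  "sumset A B = {(\<lambda>i. a i + b i) | a b. a \<in> A \<and> b \<in> B}"

end

theory Submission
  imports Defs "HOL-Analysis.Convex"
begin

definition sl :: "(nat \<Rightarrow> int) set \<Rightarrow> nat \<Rightarrow> int \<Rightarrow> (nat \<Rightarrow> int) set" where
  "sl X n k = {x. (\<forall>i\<ge>n. x i = 0) \<and> x(n:=k) \<in> X}"

lemma grid_Suc: "grid (Suc n) m = (\<lambda>(x,k). x(n:=k)) ` (grid n m \<times> {0..m})"
proof (intro equalityI subsetI)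
  fix y assume y: "y \<in> grid (Suc n) m"
  have "y = (\<lambda>(x,k). x(n:=k)) (y(n:=0), y n)" by simp
  moreover have "(y(n:=0), y n) \<in> grid n m \<times> {0..m}" using y
    by (auto simp: grid_def)
  ultimately show "y \<in> (\<lambda>(x,k). x(n:=k)) ` (grid n m \<times> {0..m})" by blast
next
  fix y assume "y \<in> (\<lambda>(x,k). x(n:=k)) ` (grid n m \<times> {0..m})"
  then obtain x k where y: "y = x(n:=k)" and x: "x \<in> grid n m" and k: "0 \<le> k" "k \<le> m" by auto
  have "\<forall>i<Suc n. 0 \<le> y i \<and> y i \<le> m"
  proof (intro allI impI)
    fix i assume "i < Suc n"
    then consider "i = n" | "i < n" by linarith
    then show "0 \<le> y i \<and> y i \<le> m"
      by cases (use x k y in \<open>auto simp: grid_def\<close>)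
  qed
  moreover have "\<forall>i\<ge>Suc n. y i = 0" using x y by (auto simp: grid_def)
  ultimately show "y \<in> grid (Suc n) m" by (simp add: grid_def)
qed

lemma inj_upd: "inj_on (\<lambda>(x,k). x((n::nat):=k)) ({x. \<forall>i\<ge>n. x i = (0::int)} \<times> UNIV)"
proof (rule inj_onI)
  fix p q assume p: "p \<in> {x. \<forall>i\<ge>n. x i = (0::int)} \<times> UNIV" and q: "q \<in> {x. \<forall>i\<ge>n. x i = (0::int)} \<times> UNIV"
    and e: "(\<lambda>(x,k). x(n:=k)) p = (\<lambda>(x,k). x(n:=k)) q"
  obtain x k where pp: "p = (x,k)" by (cases p)
  obtain y l where qq: "q = (y,l)" by (cases q)
  have e': "x(n:=k) = y(n:=l)" using e pp qq by simp
  have "k = l" using fun_cong[OF e', of n] by simp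
  moreover have "x = y"
  proof
    fix i
    have "\<forall>i\<ge>n. x i = 0" "\<forall>i\<ge>n. y i = 0" using p q pp qq by auto
    then have "x n = 0" "y n = 0" by auto
    then show "x i = y i"
      using fun_cong[OF e', of i] by (cases "i = n") auto
  qed
  ultimately show "p = q" using pp qq by simp
qed

lemma grid_sub_zero: "grid n m \<subseteq> {x. \<forall>i\<ge>n. x i = 0}"
  by (auto simp: grid_def)

lemma grid0: "grid 0 m = {\<lambda>_. 0}"
  by (auto simp: grid_def)

lemma card_grid: "finite (grid n (int p)) \<and> card (grid n (int p)) = (p+1)^n"
proof (induction n)
  case 0 then show ?case by (simp add: grid0)
next
  case (Suc n)
  have inj: "inj_on (\<lambda>(x,k). x(n:=k)) (grid n (int p) \<times> {0..int p})"
    by (rule inj_on_subset[OF inj_upd]) (use grid_sub_zero in auto)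
  show ?case unfolding grid_Suc
  proof -
    have "nat (int p + 1) = Suc p" by simp
    then show "finite ((\<lambda>(x, k). x(n := k)) ` (grid n (int p) \<times> {0..int p})) \<and>
      card ((\<lambda>(x, k). x(n := k)) ` (grid n (int p) \<times> {0..int p})) = (p + 1) ^ Suc n"
      using Suc inj by (simp add: card_image card_cartesian_product)
  qed
qed

lemma sl_sub: "X \<subseteq> grid (Suc n) m \<Longrightarrow> sl X n k \<subseteq> grid n m"
proof
  fix x assume X: "X \<subseteq> grid (Suc n) m" and x: "x \<in> sl X n k"
  then have z: "\<forall>i\<ge>n. x i = 0" and "x(n:=k) \<in> grid (Suc n) m" by (auto simp: sl_def)
  then have g: "\<forall>i<Suc n. 0 \<le> (x(n:=k)) i \<and> (x(n:=k)) i \<le> m" unfolding grid_def by blast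
  have "\<forall>i<n. 0 \<le> x i \<and> x i \<le> m"
  proof (intro allI impI)
    fix i assume i: "i < n"
    then have "i < Suc n" "i \<noteq> n" by auto
    then have "0 \<le> (x(n:=k)) i \<and> (x(n:=k)) i \<le> m" using g by blast
    then show "0 \<le> x i \<and> x i \<le> m" using i by simp
  qed
  then show "x \<in> grid n m" using z by (simp add: grid_def)
qed

lemma sl_empty: assumes "X \<subseteq> grid (Suc n) (int r)" shows "sl X n (int (Suc r)) = {}"
proof (rule equals0I)
  fix x assume "x \<in> sl X n (int (Suc r))"
  then have "x(n:=int(Suc r)) \<in> grid (Suc n) (int r)" using assms by (auto simp: sl_def)
  then have "(x(n:=int (Suc r))) n \<le> int r" unfolding grid_def by blast
  then show False by simp
qed

lemma card_slices:
  assumes X: "X \<subseteq> grid (Suc n) (int m)"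
  shows "card X = (\<Sum>k\<le>m. card (sl X n (int k)))"
proof -
  have eq: "X = (\<Union>k\<in>{..m}. (\<lambda>x. x(n:=int k)) ` sl X n (int k))"
  proof (intro equalityI subsetI)
    fix y assume y: "y \<in> X"
    then have yg: "y \<in> grid (Suc n) (int m)" using X by auto
    then have "0 \<le> y n" "y n \<le> int m" by (auto simp: grid_def)
    then obtain k where k: "y n = int k" "k \<le> m" by (metis nonneg_int_cases of_nat_le_iff)
    have yk: "y(n:=int k) = y" using k by (intro ext) simp
    have "y(n:=0) \<in> sl X n (int k)" using y yg k yk by (auto simp: sl_def grid_def)
    moreover have "y = (y(n:=0))(n:=int k)" using yk by simp
    ultimately show "y \<in> (\<Union>k\<in>{..m}. (\<lambda>x. x(n:=int k)) ` sl X n (int k))" using k by blast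
  next
    fix y assume "y \<in> (\<Union>k\<in>{..m}. (\<lambda>x. x(n:=int k)) ` sl X n (int k))"
    then show "y \<in> X" by (auto simp: sl_def)
  qed
  have fin: "finite (sl X n k)" for k
    using sl_sub[OF X, of k] card_grid[of n m] by (meson finite_subset)
  have inj: "inj_on (\<lambda>x. x(n:=k)) (sl X n k)" for k
  proof (rule inj_onI)
    fix x y assume xy: "x \<in> sl X n k" "y \<in> sl X n k" and e: "x(n:=k) = y(n:=k)"
    have "x n = 0" "y n = 0" using xy by (auto simp: sl_def)
    show "x = y"
    proof
      fix i show "x i = y i"
        using fun_cong[OF e, of i] \<open>x n = 0\<close> \<open>y n = 0\<close> by (cases "i = n") auto
    qed
  qed
  have "card X = (\<Sum>k\<le>m. card ((\<lambda>x. x(n:=int k)) ` sl X n (int k)))"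
  proof (subst eq, rule card_UN_disjoint)
    show "finite {..m}" by simp
    show "\<forall>i\<in>{..m}. finite ((\<lambda>x. x(n:=int i)) ` sl X n (int i))" using fin by simp
    have im: "(\<lambda>x. x(n:=int i)) ` S \<subseteq> {z. z n = int i}" for i :: nat and S :: "(nat \<Rightarrow> int) set" by auto
    show "\<forall>i\<in>{..m}. \<forall>j\<in>{..m}. i \<noteq> j \<longrightarrow>
      (\<lambda>x. x(n:=int i)) ` sl X n (int i) \<inter> (\<lambda>x. x(n:=int j)) ` sl X n (int j) = {}"
    proof (intro ballI impI)
      fix i j :: nat assume "i \<noteq> j"
      then have "{z. z n = int i} \<inter> {z::nat\<Rightarrow>int. z n = int j} = {}" by auto
      then show "(\<lambda>x. x(n:=int i)) ` sl X n (int i) \<inter> (\<lambda>x. x(n:=int j)) ` sl X n (int j) = {}"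
        using im[of i "sl X n (int i)"] im[of j "sl X n (int j)"] by blast
    qed
  qed
  also have "\<dots> = (\<Sum>k\<le>m. card (sl X n (int k)))"
    using inj by (simp add: card_image)
  finally show ?thesis .
qed

lemma sumset_sl: "sumset (sl A n i) (sl B n j) \<subseteq> sl (sumset A B) n (i+j)"
proof
  fix z assume "z \<in> sumset (sl A n i) (sl B n j)"
  then obtain x y where z: "z = (\<lambda>l. x l + y l)" and x: "x \<in> sl A n i" and y: "y \<in> sl B n j"
    by (auto simp: sumset_def)
  have "z(n:=i+j) = (\<lambda>l. (x(n:=i)) l + (y(n:=j)) l)" using z by auto
  moreover have "x(n:=i) \<in> A" "y(n:=j) \<in> B" using x y by (auto simp: sl_def)
  ultimately have "z(n:=i+j) \<in> sumset A B" unfolding sumset_def by blast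
  moreover have "\<forall>l\<ge>n. z l = 0" using x y z by (auto simp: sl_def)
  ultimately show "z \<in> sl (sumset A B) n (i+j)" by (simp add: sl_def)
qed

lemma sumset_grid: assumes "A \<subseteq> grid n p" "B \<subseteq> grid n q" shows "sumset A B \<subseteq> grid n (p+q)"
proof
  fix z assume "z \<in> sumset A B"
  then obtain a b where z: "z = (\<lambda>i. a i + b i)" and "a \<in> A" "b \<in> B" unfolding sumset_def by blast
  then have a: "a \<in> grid n p" and b: "b \<in> grid n q" using assms by auto
  show "z \<in> grid n (p+q)" using a b unfolding z grid_def by (simp add: add_mono)
qed

lemma sum_split_ivl:
  fixes f :: "nat \<Rightarrow> real"
  assumes "j \<le> Suc r"
  shows "(\<Sum>k\<le>r. f k) = (\<Sum>k<j. f k) + (\<Sum>k\<in>{j..r}. f k)"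
proof -
  have "{..r} = {..<j} \<union> {j..r}" using assms by auto
  moreover have "{..<j} \<inter> {j..r} = {}" by auto
  ultimately show ?thesis by (simp add: sum.union_disjoint)
qed

lemma sum_atMost_shift0:
  fixes f :: "nat \<Rightarrow> real"
  shows "(\<Sum>k\<le>j. f k) = f 0 + (\<Sum>k<j. f (Suc k))"
  by (induction j) auto

lemma thr:
  fixes a0 a1 :: real and b :: "nat \<Rightarrow> real"
  assumes "a0 \<ge> 0" "a1 \<ge> 0" "j \<le> r"
  shows "a0 * (\<Sum>k\<le>j. b k) + a1 * (\<Sum>k\<in>{j..r}. b k)
     \<le> a0 * b 0 + (\<Sum>k\<le>r. max (a0 * b (Suc k)) (a1 * b k))"
proof -
  have e: "(\<Sum>k\<le>r. max (a0 * b (Suc k)) (a1 * b k)) =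
     (\<Sum>k<j. max (a0 * b (Suc k)) (a1 * b k)) + (\<Sum>k\<in>{j..r}. max (a0 * b (Suc k)) (a1 * b k))"
    using assms(3) by (intro sum_split_ivl) simp
  have 1: "(\<Sum>k<j. a0 * b (Suc k)) \<le> (\<Sum>k<j. max (a0 * b (Suc k)) (a1 * b k))"
    by (intro sum_mono) simp
  have 2: "(\<Sum>k\<in>{j..r}. a1 * b k) \<le> (\<Sum>k\<in>{j..r}. max (a0 * b (Suc k)) (a1 * b k))"
    by (intro sum_mono) simp
  have 3: "a0 * (\<Sum>k\<le>j. b k) = a0 * b 0 + (\<Sum>k<j. a0 * b (Suc k))"
    by (simp add: sum_atMost_shift0 sum_distrib_left distrib_left)
  show ?thesis using e 1 2 3 by (simp add: sum_distrib_left)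
qed

lemma pid:
  fixes b :: "nat \<Rightarrow> real"
  shows "(\<Sum>j\<le>r. b j * (\<Sum>k\<le>j. b k)) = ((\<Sum>k\<le>r. b k)^2 + (\<Sum>k\<le>r. b k ^2))/2"
  by (induction r) (auto simp: power2_eq_square algebra_simps)

lemma ptsplit:
  fixes b :: "nat \<Rightarrow> real"
  assumes "j \<le> r"
  shows "(\<Sum>k\<le>j. b k) + (\<Sum>k\<in>{j..r}. b k) = (\<Sum>k\<le>r. b k) + b j"
proof -
  have "(\<Sum>k\<le>r. b k) = (\<Sum>k<j. b k) + (\<Sum>k\<in>{j..r}. b k)"
    using assms by (intro sum_split_ivl) simp
  moreover have "(\<Sum>k\<le>j. b k) = (\<Sum>k<j. b k) + b j" by (simp add: lessThan_Suc_atMost[symmetric])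
  ultimately show ?thesis by simp
qed

lemma oneD:
  fixes a0 a1 :: real and b :: "nat \<Rightarrow> real" and r :: nat
  assumes a0: "a0 \<ge> 0" and a1: "a1 \<ge> 0" and b: "\<And>k. b k \<ge> 0"
  shows "(a0+a1)*(real r+2)*(\<Sum>k\<le>r. b k)
     \<le> 2*(real r+1)*(a0*b 0 + (\<Sum>k\<le>r. max (a0*b(Suc k)) (a1*b k)))"
proof -
  define G where "G = a0*b 0 + (\<Sum>k\<le>r. max (a0*b(Suc k)) (a1*b k))"
  define S where "S = (\<Sum>k\<le>r. b k)"
  define Q where "Q = (\<Sum>k\<le>r. b k ^ 2)"
  define PS where "PS = (\<Sum>j\<le>r. b j * (\<Sum>k\<le>j. b k))"
  have G0: "G \<ge> 0" unfolding G_def using a0 a1 b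
    by (intro add_nonneg_nonneg sum_nonneg) (auto intro: max.coboundedI1)
  have S0: "S \<ge> 0" unfolding S_def using b by (simp add: sum_nonneg)
  have PSe: "PS = (S^2 + Q)/2" unfolding PS_def S_def Q_def by (rule pid)
  have TS: "(\<Sum>j\<le>r. b j * (\<Sum>k\<in>{j..r}. b k)) = S^2 + Q - PS"
  proof -
    have "(\<Sum>j\<le>r. b j * (\<Sum>k\<in>{j..r}. b k)) + PS = (\<Sum>j\<le>r. b j * (S + b j))"
      unfolding PS_def S_def
      by (simp add: sum.distrib[symmetric] distrib_left[symmetric] ptsplit add.commute)
    also have "\<dots> = S^2 + Q" unfolding Q_def
      by (simp add: distrib_left sum.distrib sum_distrib_right[symmetric] S_def power2_eq_square mult.commute)
    finally show ?thesis by simp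
  qed
  have "(\<Sum>j\<le>r. b j * (a0 * (\<Sum>k\<le>j. b k) + a1 * (\<Sum>k\<in>{j..r}. b k))) \<le> (\<Sum>j\<le>r. b j * G)"
    unfolding G_def using a0 a1 b
    by (intro sum_mono mult_left_mono thr) auto
  also have "\<dots> = S * G" unfolding S_def by (simp add: sum_distrib_right)
  moreover have "(\<Sum>j\<le>r. b j * (a0 * (\<Sum>k\<le>j. b k) + a1 * (\<Sum>k\<in>{j..r}. b k)))
      = a0 * PS + a1 * (\<Sum>j\<le>r. b j * (\<Sum>k\<in>{j..r}. b k))"
    unfolding PS_def by (simp add: distrib_left sum.distrib sum_distrib_left mult.left_commute)
  ultimately have X: "a0 * PS + a1 * (S^2 + Q - PS) \<le> S * G"
    using TS by simp
  have Y: "(a0 + a1) * (S^2 + Q) = 2 * (a0 * PS + a1 * (S^2 + Q - PS))"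
    unfolding PSe by (simp add: field_simps)
  have key: "(a0 + a1) * (S^2 + Q) \<le> 2 * (S * G)" unfolding Y using X by simp
  have CS: "S^2 \<le> Q * (real r + 1)" unfolding S_def Q_def
    using sum_squared_le_sum_of_squares[of b "{..r}"] by (simp add: add.commute)
  show ?thesis
  proof (cases "S = 0")
    case True then show ?thesis using G0 by (simp add: S_def[symmetric] G_def[symmetric])
  next
    case False
    then have Sp: "S > 0" using S0 by simp
    have "(a0+a1)*(real r+2)*S * S = (a0+a1)*((real r + 1) * S^2 + S^2)"
      by (simp add: power2_eq_square algebra_simps)
    also have "\<dots> \<le> (a0+a1)*((real r + 1) * S^2 + (real r + 1) * Q)"
      using CS a0 a1 by (intro mult_left_mono add_left_mono) (auto simp: mult.commute)
    also have "\<dots> = (real r + 1) * ((a0 + a1) * (S^2 + Q))" by (simp add: algebra_simps)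
    also have "\<dots> \<le> (real r + 1) * (2 * (S * G))" using key by (intro mult_left_mono) auto
    finally have "(a0+a1)*(real r+2)*S * S \<le> (2*(real r+1)*G) * S" by (simp add: algebra_simps)
    then have "(a0+a1)*(real r+2)*S \<le> 2*(real r+1)*G" using Sp by simp
    then show ?thesis by (simp add: S_def G_def)
  qed
qed

lemma main:
  "A \<subseteq> grid n 1 \<Longrightarrow> B \<subseteq> grid n (int r) \<Longrightarrow>
   real (card A) * real (card B) * (real r + 2)^n \<le> real (card (sumset A B)) * (2*(real r+1))^n"
proof (induction n arbitrary: A B)
  case 0
  then have A: "A \<subseteq> {\<lambda>_. 0}" and B: "B \<subseteq> {\<lambda>_. 0}" by (auto simp: grid0)
  show ?case
  proof (cases "A = {} \<or> B = {}")
    case True then show ?thesis by auto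
  next
    case False
    then have "A = {\<lambda>_. 0}" "B = {\<lambda>_. 0}" using A B by blast+
    moreover have "sumset {\<lambda>_. 0} {\<lambda>_. 0} = {\<lambda>_. 0::int}" by (auto simp: sumset_def)
    ultimately show ?thesis by simp
  qed
next
  case (Suc n)
  define P where "P = (real r + 2)^n"
  define D where "D = (2*(real r+1))^n"
  define a0 where "a0 = real (card (sl A n 0))"
  define a1 where "a1 = real (card (sl A n 1))"
  define b where "b k = real (card (sl B n (int k)))" for k
  define c where "c k = real (card (sl (sumset A B) n (int k)))" for k
  have SAB: "sumset A B \<subseteq> grid (Suc n) (int (Suc r))"
    using sumset_grid[OF Suc.prems] by (simp add: add.commute)
  have A1: "A \<subseteq> grid (Suc n) (int 1)" using Suc.prems(1) by simp
  have cA: "real (card A) = a0 + a1"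
  proof -
    have "{..1::nat} = {0,1}" by auto
    then show ?thesis using card_slices[OF A1] by (simp add: a0_def a1_def)
  qed
  have cB: "real (card B) = (\<Sum>k\<le>r. b k)"
    using card_slices[OF Suc.prems(2)] by (simp add: b_def)
  have cS: "real (card (sumset A B)) = c 0 + (\<Sum>k\<le>r. c (Suc k))"
    using card_slices[OF SAB] by (simp add: c_def sum.atMost_Suc_shift del: sum.atMost_Suc)
  have fin: "finite (sl (sumset A B) n k)" for k
    using sl_sub[OF SAB, of k] card_grid[of n "Suc r"] by (meson finite_subset)
  have sA: "sl A n i \<subseteq> grid n 1" for i using sl_sub[OF Suc.prems(1)] .
  have sB: "sl B n j \<subseteq> grid n (int r)" for j using sl_sub[OF Suc.prems(2)] .
  have D0: "D \<ge> 0" unfolding D_def by simp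
  have P0: "P \<ge> 0" unfolding P_def by simp
  have IHg: "real (card (sl A n i)) * real (card (sl B n j)) * P
      \<le> real (card (sl (sumset A B) n (i+j))) * D" for i j
  proof -
    have "real (card (sl A n i)) * real (card (sl B n j)) * P
        \<le> real (card (sumset (sl A n i) (sl B n j))) * D"
      unfolding P_def D_def by (rule Suc.IH[OF sA sB])
    also have "\<dots> \<le> real (card (sl (sumset A B) n (i+j))) * D"
      using D0 card_mono[OF fin sumset_sl] by (intro mult_right_mono) auto
    finally show ?thesis .
  qed
  have h0: "a0 * b k * P \<le> c k * D" for k
    using IHg[of 0 "int k"] by (simp add: a0_def b_def c_def)
  have h1: "a1 * b k * P \<le> c (Suc k) * D" for k
  proof -
    have "int (Suc k) = 1 + int k" by simp
    then show ?thesis using IHg[of 1 "int k"] by (simp add: a1_def b_def c_def)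
  qed
  have hmax: "max (a0 * b (Suc k)) (a1 * b k) * P \<le> c (Suc k) * D" for k
    using h0[of "Suc k"] h1[of k] by (simp add: max_def)
  have a0p: "a0 \<ge> 0" "a1 \<ge> 0" "\<And>k. b k \<ge> 0" by (auto simp: a0_def a1_def b_def)
  have one: "(a0+a1)*(real r+2)*(\<Sum>k\<le>r. b k)
     \<le> 2*(real r+1)*(a0*b 0 + (\<Sum>k\<le>r. max (a0*b(Suc k)) (a1*b k)))"
    by (rule oneD[OF a0p])
  have sumle: "(a0*b 0 + (\<Sum>k\<le>r. max (a0*b(Suc k)) (a1*b k))) * P \<le> (c 0 + (\<Sum>k\<le>r. c (Suc k))) * D"
  proof -
    have "(a0*b 0 + (\<Sum>k\<le>r. max (a0*b(Suc k)) (a1*b k))) * P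
        = a0*b 0*P + (\<Sum>k\<le>r. max (a0*b(Suc k)) (a1*b k) * P)"
      by (simp add: distrib_right sum_distrib_right)
    also have "\<dots> \<le> c 0 * D + (\<Sum>k\<le>r. c (Suc k) * D)"
      using h0[of 0] hmax by (intro add_mono sum_mono) auto
    also have "\<dots> = (c 0 + (\<Sum>k\<le>r. c (Suc k))) * D"
      by (simp add: distrib_right sum_distrib_right)
    finally show ?thesis .
  qed
  have "real (card A) * real (card B) * (real r + 2) ^ Suc n
      = ((a0+a1)*(real r+2)*(\<Sum>k\<le>r. b k)) * P"
    unfolding cA cB P_def by (simp add: algebra_simps)
  also have "\<dots> \<le> (2*(real r+1)*(a0*b 0 + (\<Sum>k\<le>r. max (a0*b(Suc k)) (a1*b k)))) * P"
    using one P0 by (rule mult_right_mono)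
  also have "\<dots> = 2*(real r+1) * ((a0*b 0 + (\<Sum>k\<le>r. max (a0*b(Suc k)) (a1*b k))) * P)"
    by (simp add: algebra_simps)
  also have "\<dots> \<le> 2*(real r+1) * ((c 0 + (\<Sum>k\<le>r. c (Suc k))) * D)"
    using sumle by (intro mult_left_mono) auto
  also have "\<dots> = real (card (sumset A B)) * (2 * (real r + 1)) ^ Suc n"
    unfolding cS D_def by (simp add: algebra_simps)
  finally show ?case .
qed

theorem proposition3p1:
  fixes r n :: nat and A B :: "(nat \<Rightarrow> int) set"
  assumes "r \<ge> 1" and "n \<ge> 1"
    and "A \<subseteq> grid n 1" and "B \<subseteq> grid n (int r)"
  shows "density (sumset A B) (grid n (int r + 1))
           \<ge> density A (grid n 1) * density B (grid n (int r))"
proof -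
  have g1: "real (card (grid n 1)) = 2^n" using card_grid[of n 1] by simp
  have g2: "real (card (grid n (int r))) = (real r + 1)^n" using card_grid[of n r] by (simp add: add.commute)
  have g3: "real (card (grid n (int r + 1))) = (real r + 2)^n"
    using card_grid[of n "Suc r"] by (simp add: add.commute)
  have M: "real (card A) * real (card B) * (real r + 2)^n \<le> real (card (sumset A B)) * (2*(real r+1))^n"
    by (rule main[OF assms(3,4)])
  have pos: "(2::real)^n * (real r + 1)^n > 0" "(real r + 2)^n > 0" by auto
  have "density A (grid n 1) * density B (grid n (int r))
      = real (card A) * real (card B) / (2^n * (real r + 1)^n)"
    unfolding density_def g1 g2 by simp
  also have "\<dots> \<le> real (card (sumset A B)) / (real r + 2)^n"
  proof -
    have M': "real (card A) * real (card B) * (real r + 2)^n \<le> real (card (sumset A B)) * (2^n * (real r+1)^n)"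
      using M by (simp only: power_mult_distrib)
    show ?thesis using M' pos by (simp add: pos_divide_le_eq pos_le_divide_eq mult.commute mult.left_commute)
  qed
  also have "\<dots> = density (sumset A B) (grid n (int r + 1))"
    unfolding density_def g3 ..
  finally show ?thesis .
qed

end
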